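(* Let $\mathcal P$ be a non-degenerate distribution, let $\tau_1\le\tau_2$ be integers, and let $\bm\ell_{\tau_1}=(\ell_{j,\tau_1})_{j\in[m]}\ge\bm0$ be an initial inventory. Let $(r_t,\bm a_t,\bm b_t)$, $t\in[\tau_1,\tau_2]$, be i.i.d. from $\mathcal P$. Run the following dual-price-based procedure: for $t=\tau_1,\dots,\tau_2$, choose a dual price vector $\bm p^t\in\mathbb{R}^m_{\ge0}$ using only information available up to time $t-1$ (so $\bm p^t$ is independent of $(r_t,\bm a_t,\bm b_t)$); then observe $(r_t,\bm a_t,\bm b_t)$, set $x_t=\mathbb{I}(r_t>\langle\bm a_t,\bm p^t\rangle)\cdot\mathbb{I}(\forall j\in[m],\ \ell_{j,t}+b_{jt}\ge a_{jt})$ and $\ell_{j,t+1}=\ell_{j,t}+b_{jt}-a_{jt}x_t$ for all $j$. Let $\mathcal E=\{\forall t\in[\tau_1,\tau_2]:\ \bm p^t\in\Omega_p\ \text{and}\ x_t=\mathbb{I}(r_t>\langle\bm a_t,\bm p^t\rangle)\}$. Then $$\mathbb{E}\Big[\sum_{t=\tau_1}^{\tau_2}r_tx_t+\langle\bm\ell_{\tau_2+1}-\bm\ell_{\tau_1},\bm p^*\rangle\Big]\ge(\tau_2-\tau_1+1)f(\bm p^*;\bm B)-\mu\bar a^2\,\mathbb{E}\sum_{t=\tau_1}^{\tau_2}\|\bm p^t-\bm p^*\|_2^2\,\mathbb{I}(\bm p^t\in\Omega_p)-2(\tau_2-\tau_1+1)\Big(\bar r+(\bar b+\bar a)\frac{\bar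 r}{\underline b}\Big)\Pr(\bar{\mathcal E}),$$ where $\bar{\mathcal E}$ is the complement of $\mathcal E$.
   Context: Bounded distribution $\mathcal P$ on $\mathbb{R}\times\mathbb{R}^m\times\mathbb{R}^m_{\ge0}$, sample $(r,\bm a,\bm b)$: constants $\bar r,\bar a,\bar b>0$ with $|r|<\bar r$, $\|\bm a\|_2<\bar a$, $\|\bm b\|_\infty<\bar b$ a.s., and $\underline b>0$ with $\mathbb{E}[b_j]>\underline b$ for all $j$. Let $\bm B=\mathbb{E}[\bm b]$. For $\bm B'\in\mathbb{R}^m_{\ge0}$, $\bm p\in\mathbb{R}^m_{\ge0}$ let $f(\bm p;\bm B')=\langle\bm p,\bm B'\rangle+\mathbb{E}_{(r,\bm a,\bm b)\sim\mathcal P}[r-\langle\bm a,\bm p\rangle]^+$. Let $\Omega_b=\times_{j=1}^m(\underline b,\bar b)$ and $\Omega_p=\{\bm p\in\mathbb{R}^m_{\ge0}:\sum_jp_j\le\bar r/\underline b\}$. $\mathcal P$ is non-degenerate if it is bounded and: (1) $\mathbb{E}[\bm a\bm a^\top]$ is positive definite with minimum eigenvalue $\lambda_{\min}>0$; (2) there are $\lambda,\mu>0$ such that for all $\bm p'\in\Omega_p$, $\bm B'\in\Omega_b$, and every $\bm p^*\in\arg\min_{\bm p\ge0}f(\bm p;\bm B')$, with $(\tilde r,\tilde{\bm a},\tilde{\bm b})\sim\mathcal P$: $\lambda|\langle\tilde{\bm a},\bm p'\rangle-\langle\tilde{\bm a},\bm p^*\rangle|\le|\Pr(\tilde r>\langle\tilde{\bm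 a},\bm p'\rangle\mid\tilde{\bm a})-\Pr(\tilde r>\langle\tilde{\bm a},\bm p^*\rangle\mid\tilde{\bm a})|\le\mu|\langle\tilde{\bm a},\bm p'\rangle-\langle\tilde{\bm a},\bm p^*\rangle|$; (3) for all $\bm B'\in\Omega_b$, every $\bm p^*\in\arg\min_{\bm p\ge0}f(\bm p;\bm B')$ and every $j$: $p^*_j=0\iff B'_j>\mathbb{E}[a_j\mathbb{I}(r>\langle\bm a,\bm p^*\rangle)]$ and $p^*_j>0\iff B'_j=\mathbb{E}[a_j\mathbb{I}(r>\langle\bm a,\bm p^*\rangle)]$. For non-degenerate $\mathcal P$ the minimizer of $f(\cdot;\bm B)$ over $\bm p\ge\bm 0$ is unique; it is denoted $\bm p^*$. *)

theory Defs
  imports "HOL-Probability.Probability"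
begin

type_synonym 'm sample = "real \<times> (real ^ 'm) \<times> (real ^ 'm)"

definition s_r :: "'m sample \<Rightarrow> real" where "s_r s = fst s"
definition s_a :: "'m sample \<Rightarrow> real ^ 'm" where "s_a s = fst (snd s)"
definition s_b :: "'m sample \<Rightarrow> real ^ 'm" where "s_b s = snd (snd s)"

definition dualf :: "'m::finite sample measure \<Rightarrow> real ^ 'm \<Rightarrow> real ^ 'm \<Rightarrow> real" where
  "dualf P p B' = p \<bullet> B' + (\<integral>s. max 0 (s_r s - s_a s \<bullet> p) \<partial>P)"

definition nonneg_vec :: "real ^ 'm \<Rightarrow> bool" where
  "nonneg_vec p \<longleftrightarrow> (\<forall>j. 0 \<le> p $ j)"

definition is_dual_min :: "'m::finite sample measure \<Rightarrow> real ^ 'm \<Rightarrow> real ^ 'm \<Rightarrow> bool" where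
  "is_dual_min P B' p \<longleftrightarrow> nonneg_vec p \<and> (\<forall>q. nonneg_vec q \<longrightarrow> dualf P p B' \<le> dualf P q B')"

definition Omega_b :: "real \<Rightarrow> real \<Rightarrow> (real ^ 'm) set" where
  "Omega_b bl bu = {B'. \<forall>j. bl < B' $ j \<and> B' $ j < bu}"

definition Omega_p :: "real \<Rightarrow> real \<Rightarrow> (real ^ 'm::finite) set" where
  "Omega_p rbar bl = {p. nonneg_vec p \<and> (\<Sum>j\<in>UNIV. p $ j) \<le> rbar / bl}"

definition meanB :: "'m::finite sample measure \<Rightarrow> real ^ 'm" where
  "meanB P = (\<chi> j. \<integral>s. s_b s $ j \<partial>P)"

definition bounded_dist :: "'m::finite sample measure \<Rightarrow> real \<Rightarrow> real \<Rightarrow> real \<Rightarrow> real \<Rightarrow> bool" where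
  "bounded_dist P rbar abar bbar bl \<longleftrightarrow>
     prob_space P \<and> sets P = sets borel \<and>
     0 < rbar \<and> 0 < abar \<and> 0 < bbar \<and> 0 < bl \<and>
     (AE s in P. \<bar>s_r s\<bar> < rbar \<and> norm (s_a s) < abar \<and> (\<forall>j. 0 \<le> s_b s $ j \<and> s_b s $ j < bbar)) \<and>
     (\<forall>j. (\<integral>s. s_b s $ j \<partial>P) > bl)"

definition second_moment :: "'m::finite sample measure \<Rightarrow> real ^ 'm ^ 'm" where
  "second_moment P = (\<chi> i j. \<integral>s. s_a s $ i * s_a s $ j \<partial>P)"

definition pos_def :: "real ^ 'm ^ 'm \<Rightarrow> bool" where
  "pos_def A \<longleftrightarrow> (\<forall>x. x \<noteq> 0 \<longrightarrow> x \<bullet> (A *v x) > 0)"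

definition sigma_a :: "'m::finite sample measure \<Rightarrow> 'm sample measure" where
  "sigma_a P = vimage_algebra (space P) s_a borel"

text \<open>Pr(r > <a,p> | a), as a (version of the) conditional expectation\<close>
definition cond_prob_accept :: "'m::finite sample measure \<Rightarrow> real ^ 'm \<Rightarrow> 'm sample \<Rightarrow> real" where
  "cond_prob_accept P p = real_cond_exp P (sigma_a P) (indicator {s. s_r s > s_a s \<bullet> p})"

definition nondegenerate ::
  "'m::finite sample measure \<Rightarrow> real \<Rightarrow> real \<Rightarrow> real \<Rightarrow> real \<Rightarrow> real \<Rightarrow> real \<Rightarrow> bool" where
  "nondegenerate P rbar abar bbar bl lam mu \<longleftrightarrow>
     bounded_dist P rbar abar bbar bl \<and>
     pos_def (second_moment P) \<and>
     0 < lam \<and> 0 < mu \<and>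
     (\<forall>p' \<in> Omega_p rbar bl. \<forall>B' \<in> Omega_b bl bbar. \<forall>ps. is_dual_min P B' ps \<longrightarrow>
        (AE s in P.
           lam * \<bar>s_a s \<bullet> p' - s_a s \<bullet> ps\<bar> \<le> \<bar>cond_prob_accept P p' s - cond_prob_accept P ps s\<bar> \<and>
           \<bar>cond_prob_accept P p' s - cond_prob_accept P ps s\<bar> \<le> mu * \<bar>s_a s \<bullet> p' - s_a s \<bullet> ps\<bar>)) \<and>
     (\<forall>B' \<in> Omega_b bl bbar. \<forall>ps. is_dual_min P B' ps \<longrightarrow> (\<forall>j.
        (ps $ j = 0 \<longleftrightarrow> B' $ j > (\<integral>s. s_a s $ j * indicator {s. s_r s > s_a s \<bullet> ps} s \<partial>P)) \<and>
        (ps $ j > 0 \<longleftrightarrow> B' $ j = (\<integral>s. s_a s $ j * indicator {s. s_r s > s_a s \<bullet> ps} s \<partial>P))))"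

end

theory Submission
  imports Defs
begin

lemma s_meas[measurable]:
  "s_r \<in> borel_measurable borel" "s_a \<in> borel_measurable borel" "s_b \<in> borel_measurable borel"
  unfolding s_r_def[abs_def] s_a_def[abs_def] s_b_def[abs_def]
  by (intro borel_measurable_continuous_onI continuous_intros)+

lemma pred_all_finite_type[measurable (raw)]:
  fixes P :: "'w \<Rightarrow> 'm::finite \<Rightarrow> bool"
  shows "(\<And>i. (\<lambda>x. P x i) \<in> measurable M (count_space UNIV)) \<Longrightarrow> (\<lambda>x. \<forall>i. P x i) \<in> measurable M (count_space UNIV)"
  using pred_intros_finite(3)[where I="UNIV::'m set" and M=M and P=P] by simp

lemma vec_nth_meas[measurable (raw)]:
  fixes f :: "'w \<Rightarrow> real^'n::finite"
  shows "f \<in> borel_measurable M \<Longrightarrow> (\<lambda>x. f x $ j) \<in> borel_measurable M"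
proof -
  have "(\<lambda>x::real^'n. x $ j) \<in> borel_measurable borel"
    by (intro borel_measurable_continuous_onI continuous_intros)
  then show "f \<in> borel_measurable M \<Longrightarrow> (\<lambda>x. f x $ j) \<in> borel_measurable M"
    using measurable_compose by blast
qed

definition Ind :: "real ^ 'm \<Rightarrow> 'm sample \<Rightarrow> real" where
  "Ind q = indicator {s. s_r s > s_a s \<bullet> q}"

definition gv :: "real ^ 'm \<Rightarrow> real \<Rightarrow> 'm sample \<Rightarrow> real" where
  "gv ps x s = s_r s * x + (s_b s - x *\<^sub>R s_a s) \<bullet> ps"

definition good :: "real \<Rightarrow> real \<Rightarrow> real \<Rightarrow> 'm::finite sample \<Rightarrow> bool" where
  "good rbar abar bbar s \<longleftrightarrow> \<bar>s_r s\<bar> < rbar \<and> norm (s_a s) < abar \<and> (\<forall>j. 0 \<le> s_b s $ j \<and> s_b s $ j < bbar)"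

lemma Ind_meas[measurable]: "(\<lambda>(q, s). Ind q s) \<in> borel_measurable (borel \<Otimes>\<^sub>M borel)"
  unfolding Ind_def indicator_def by measurable

lemma Ind_meas2[measurable]: "Ind q \<in> borel_measurable borel"
  unfolding Ind_def indicator_def by measurable

lemma gv_meas[measurable]: "(\<lambda>(x, s). gv ps x s) \<in> borel_measurable (borel \<Otimes>\<^sub>M borel)"
  unfolding gv_def by measurable

lemma good_meas[measurable]: "{s. good rbar abar bbar s} \<in> sets borel"
  unfolding good_def by measurable

lemma Ind_01: "Ind q s = 0 \<or> Ind q s = 1"
  unfolding Ind_def indicator_def by auto

lemma Omega_p_closed: "closed (Omega_p rbar bl :: (real^'m::finite) set)"
proof -
  have "Omega_p rbar bl = (\<Inter>j. {p::real^'m. 0 \<le> p $ j}) \<inter> {p. (\<Sum>j\<in>UNIV. p $ j) \<le> rbar / bl}"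
    unfolding Omega_p_def nonneg_vec_def by auto
  moreover have "closed {p::real^'m. (\<Sum>j\<in>UNIV. p $ j) \<le> rbar / bl}"
    by (intro closed_Collect_le continuous_intros)
  moreover have "\<And>j. closed {p::real^'m. 0 \<le> p $ j}"
    by (intro closed_Collect_le continuous_intros)
  ultimately show ?thesis by (simp add: closed_INT closed_Int)
qed

lemma Omega_p_borel[measurable]: "Omega_p rbar bl \<in> sets borel"
  using Omega_p_closed by (rule borel_closed)

lemma norm_le_sum_nonneg:
  fixes q :: "real^'m::finite"
  assumes "nonneg_vec q" shows "norm q \<le> (\<Sum>j\<in>UNIV. q $ j)"
  using norm_le_l1_cart[of q] assms unfolding nonneg_vec_def by simp

locale setting =
  fixes P :: "'m::finite sample measure" and rbar abar bbar bl lam mu :: real and pstar :: "real^'m"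
  assumes nondeg: "nondegenerate P rbar abar bbar bl lam mu"
    and pstar: "is_dual_min P (meanB P) pstar"
begin

lemma nd1: "bounded_dist P rbar abar bbar bl"
  using nondeg unfolding nondegenerate_def by (elim conjE) assumption
lemma nd2: "0 < mu"
  using nondeg unfolding nondegenerate_def by (elim conjE) assumption
lemma nd3: "\<forall>p' \<in> Omega_p rbar bl. \<forall>B' \<in> Omega_b bl bbar. \<forall>ps. is_dual_min P B' ps \<longrightarrow>
        (AE s in P.
           lam * \<bar>s_a s \<bullet> p' - s_a s \<bullet> ps\<bar> \<le> \<bar>cond_prob_accept P p' s - cond_prob_accept P ps s\<bar> \<and>
           \<bar>cond_prob_accept P p' s - cond_prob_accept P ps s\<bar> \<le> mu * \<bar>s_a s \<bullet> p' - s_a s \<bullet> ps\<bar>)"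
  using nondeg unfolding nondegenerate_def by (elim conjE) assumption
lemmas nd = nd1 nd2 nd3


lemma bd: "bounded_dist P rbar abar bbar bl" by (rule nd(1))

lemma probP: "prob_space P" using bd unfolding bounded_dist_def by (elim conjE) assumption

sublocale P: prob_space P by (rule probP)

lemma sets_P[measurable_cong]: "sets P = sets borel" using bd unfolding bounded_dist_def by (elim conjE) assumption

lemma pos0: "0 < rbar" using bd unfolding bounded_dist_def by (elim conjE) assumption
lemma pos1: "0 < abar" using bd unfolding bounded_dist_def by (elim conjE) assumption
lemma pos2: "0 < bbar" using bd unfolding bounded_dist_def by (elim conjE) assumption
lemma pos3: "0 < bl" using bd unfolding bounded_dist_def by (elim conjE) assumption
lemmas pos = pos0 pos1 pos2 pos3 nd2

lemma AE_good: "AE s in P. good rbar abar bbar s"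
  using bd unfolding bounded_dist_def good_def by (elim conjE) assumption

lemma Eb_gt: "(\<integral>s. s_b s $ j \<partial>P) > bl"
  using bd unfolding bounded_dist_def by (elim conjE) blast

lemma int_bounded:
  fixes f :: "'m sample \<Rightarrow> real"
  assumes "f \<in> borel_measurable P" "AE s in P. good rbar abar bbar s \<longrightarrow> \<bar>f s\<bar> \<le> B"
  shows "integrable P f"
proof (rule P.integrable_const_bound[where B=B])
  show "AE x in P. norm (f x) \<le> B" using assms(2) AE_good by eventually_elim auto
qed (fact assms(1))

lemma int_b: "integrable P (\<lambda>s. s_b s $ j)"
proof (rule int_bounded[where B=bbar])
  show "AE s in P. good rbar abar bbar s \<longrightarrow> \<bar>s_b s $ j\<bar> \<le> bbar"
    by (intro AE_I2 impI) (auto simp: good_def abs_le_iff intro: less_imp_le order_trans[of _ 0])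
qed measurable

lemma B_in: "meanB P \<in> Omega_b bl bbar"
proof -
  have "(\<integral>s. s_b s $ j \<partial>P) < (\<integral>s. bbar \<partial>P)" for j
  proof (rule P.integral_less_AE_space)
    show "AE x in P. s_b x $ j < bbar" using AE_good by eventually_elim (auto simp: good_def)
  qed (auto simp: int_b P.emeasure_space_1)
  moreover have "measure P (space P) = 1" by (rule P.prob_space)
  ultimately show ?thesis using Eb_gt unfolding Omega_b_def meanB_def by auto
qed

lemma int_pos_part: fixes q :: "real^'m" shows "integrable P (\<lambda>s. max 0 (s_r s - s_a s \<bullet> q))"
proof (rule int_bounded[where B="rbar + abar * norm q"])
  show "AE s in P. good rbar abar bbar s \<longrightarrow> \<bar>max 0 (s_r s - s_a s \<bullet> q)\<bar> \<le> rbar + abar * norm q"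
  proof (intro AE_I2 impI)
    fix s :: "'m sample" assume g: "good rbar abar bbar s"
    have "\<bar>s_a s \<bullet> q\<bar> \<le> norm (s_a s) * norm q" by (rule Cauchy_Schwarz_ineq2)
    also have "\<dots> \<le> abar * norm q" using g by (auto simp: good_def intro!: mult_right_mono)
    finally show "\<bar>max 0 (s_r s - s_a s \<bullet> q)\<bar> \<le> rbar + abar * norm q" using g by (auto simp: good_def)
  qed
qed measurable

lemma pstar_nonneg: "nonneg_vec pstar" using pstar unfolding is_dual_min_def by (elim conjE)

lemma pstar_sum: "(\<Sum>j\<in>UNIV. pstar $ j) \<le> rbar / bl"
proof -
  have "nonneg_vec (0::real^'m)" by (simp add: nonneg_vec_def)
  then have "dualf P pstar (meanB P) \<le> dualf P 0 (meanB P)"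
    using pstar unfolding is_dual_min_def by blast
  also have "dualf P 0 (meanB P) = (\<integral>s. max 0 (s_r s) \<partial>P)" unfolding dualf_def by simp
  also have "\<dots> \<le> rbar"
  proof (rule P.integral_le_const)
    show "integrable P (\<lambda>s. max 0 (s_r s))" using int_pos_part[of 0] by (simp only: inner_zero_right diff_zero)
    show "AE s in P. max 0 (s_r s) \<le> rbar" by (rule AE_mp[OF AE_good], rule AE_I2) (use pos in \<open>auto simp: good_def\<close>)
  qed
  finally have 1: "dualf P pstar (meanB P) \<le> rbar" .
  have "pstar \<bullet> meanB P \<le> dualf P pstar (meanB P)" unfolding dualf_def
    by (simp add: Bochner_Integration.integral_nonneg)
  moreover have "pstar \<bullet> meanB P = (\<Sum>j\<in>UNIV. pstar $ j * (\<integral>s. s_b s $ j \<partial>P))"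
    unfolding meanB_def inner_vec_def by simp
  moreover have "(\<Sum>j\<in>UNIV. pstar $ j * bl) \<le> (\<Sum>j\<in>UNIV. pstar $ j * (\<integral>s. s_b s $ j \<partial>P))"
    using pstar_nonneg Eb_gt unfolding nonneg_vec_def
    by (intro sum_mono mult_left_mono) (auto intro: less_imp_le)
  ultimately have "(\<Sum>j\<in>UNIV. pstar $ j) * bl \<le> rbar" using 1 by (simp add: sum_distrib_right)
  then show ?thesis using pos by (simp add: field_simps)
qed

lemma pstar_in: "pstar \<in> Omega_p rbar bl"
  using pstar_nonneg pstar_sum unfolding Omega_p_def by auto

definition C where "C = rbar + (bbar + abar) * (rbar / bl)"

lemma gv_bound:
  assumes g: "good rbar abar bbar s" and x: "x = 0 \<or> x = 1"
  shows "\<bar>gv pstar x s\<bar> \<le> C"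
proof -
  let ?S = "\<Sum>j\<in>UNIV. pstar $ j"
  have b1: "0 \<le> s_b s \<bullet> pstar" using g pstar_nonneg unfolding good_def nonneg_vec_def inner_vec_def
    by (intro sum_nonneg) auto
  have b2: "s_b s \<bullet> pstar \<le> bbar * ?S" using g pstar_nonneg unfolding good_def nonneg_vec_def inner_vec_def
    by (simp add: sum_distrib_left, intro sum_mono mult_right_mono) (auto intro: less_imp_le)
  have "\<bar>s_a s \<bullet> pstar\<bar> \<le> norm (s_a s) * norm pstar" by (rule Cauchy_Schwarz_ineq2)
  also have "\<dots> \<le> abar * ?S" using g norm_le_sum_nonneg[OF pstar_nonneg] pos
    by (intro mult_mono) (auto simp: good_def)
  finally have a1: "\<bar>s_a s \<bullet> pstar\<bar> \<le> abar * ?S" .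
  have S: "?S \<le> rbar / bl" by (rule pstar_sum)
  have "bbar * ?S \<le> bbar * (rbar/bl)" "abar * ?S \<le> abar * (rbar/bl)"
    using mult_left_mono[OF S, of bbar] mult_left_mono[OF S, of abar] pos by auto
  moreover have "\<bar>gv pstar x s\<bar> \<le> \<bar>s_r s\<bar> + \<bar>s_b s \<bullet> pstar\<bar> + \<bar>s_a s \<bullet> pstar\<bar>"
    using x
  proof
    assume "x = 0" then show ?thesis by (simp add: gv_def)
  next
    assume "x = 1" then show ?thesis unfolding gv_def by (simp add: inner_diff_left abs_triangle_ineq4)
  qed
  ultimately have "\<bar>gv pstar x s\<bar> \<le> rbar + bbar * (rbar/bl) + abar * (rbar/bl)"
    using g b1 b2 a1 unfolding good_def by linarith
  then show ?thesis unfolding C_def distrib_right by linarith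
qed

lemma C_nonneg: "0 \<le> C" unfolding C_def using pos by simp


lemma int_gv: "integrable P (\<lambda>s. gv pstar (Ind q s) s)"
proof (rule int_bounded[where B=C])
  show "AE s in P. good rbar abar bbar s \<longrightarrow> \<bar>gv pstar (Ind q s) s\<bar> \<le> C"
    by (intro AE_I2 impI gv_bound Ind_01)
next
  have "(\<lambda>s. gv pstar (Ind q s) s) \<in> borel_measurable borel"
    using measurable_Pair_compose_split[OF gv_meas Ind_meas2 measurable_id] by simp
  then show "(\<lambda>s. gv pstar (Ind q s) s) \<in> borel_measurable P" by measurable
qed

lemma int_sb_inner: fixes v :: "real^'m" shows "integrable P (\<lambda>s. s_b s \<bullet> v)"
proof -
  have "integrable P (\<lambda>s. \<Sum>j\<in>UNIV. s_b s $ j * v $ j)"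
    using int_b by (intro Bochner_Integration.integrable_sum integrable_mult_left) auto
  then show ?thesis unfolding inner_vec_def by simp
qed

lemma integral_sb_inner: fixes v :: "real^'m" shows "(\<integral>s. s_b s \<bullet> v \<partial>P) = meanB P \<bullet> v"
proof -
  have "(\<integral>s. s_b s \<bullet> v \<partial>P) = (\<integral>s. (\<Sum>j\<in>UNIV. s_b s $ j * v $ j) \<partial>P)"
    unfolding inner_vec_def by simp
  also have "\<dots> = (\<Sum>j\<in>UNIV. (\<integral>s. s_b s $ j \<partial>P) * v $ j)"
    using int_b by (subst Bochner_Integration.integral_sum) auto
  also have "\<dots> = meanB P \<bullet> v" unfolding meanB_def inner_vec_def by simp
  finally show ?thesis .
qed

lemma integral_gv_pstar: "(\<integral>s. gv pstar (Ind pstar s) s \<partial>P) = dualf P pstar (meanB P)"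
proof -
  have eq: "gv pstar (Ind pstar s) s = max 0 (s_r s - s_a s \<bullet> pstar) + s_b s \<bullet> pstar" for s
    unfolding gv_def Ind_def indicator_def by (auto simp: inner_diff_left)
  have "(\<integral>s. gv pstar (Ind pstar s) s \<partial>P) = (\<integral>s. max 0 (s_r s - s_a s \<bullet> pstar) \<partial>P) + (\<integral>s. s_b s \<bullet> pstar \<partial>P)"
    unfolding eq using int_pos_part int_sb_inner by (rule Bochner_Integration.integral_add)
  then show ?thesis unfolding integral_sb_inner dualf_def by (simp add: inner_commute)
qed

lemma subalg: "subalgebra P (sigma_a P)"
proof -
  have sa: "s_a \<in> space P \<rightarrow> space borel" by simp
  have "s_a \<in> borel_measurable P" by measurable
  then have "sets (sigma_a P) \<subseteq> sets P"
    unfolding sigma_a_def sets_vimage_algebra2[OF sa] by (auto intro: measurable_sets)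
  then show ?thesis unfolding subalgebra_def sigma_a_def by simp
qed

lemma sfs: "sigma_finite_subalgebra P (sigma_a P)"
  by (rule finite_measure_subalgebra_is_sigma_finite)
     (simp add: finite_measure_subalgebra_def finite_measure_subalgebra_axioms_def subalg P.finite_measure_axioms)

lemma sa_meas: "s_a \<in> borel_measurable (sigma_a P)"
  unfolding sigma_a_def by (rule measurable_vimage_algebra1) simp

lemma main_P:
  assumes q: "q \<in> Omega_p rbar bl"
  shows "(\<integral>s. gv pstar (Ind q s) s \<partial>P) \<ge> dualf P pstar (meanB P) - mu * abar\<^sup>2 * (norm (q - pstar))\<^sup>2"
proof -
  interpret S: sigma_finite_subalgebra P "sigma_a P" by (rule sfs)
  define d where "d s = s_a s \<bullet> (q - pstar)" for s
  define n where "n = norm (q - pstar)"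
  have dm: "d \<in> borel_measurable (sigma_a P)"
  proof -
    have "(\<lambda>v::real^'m. v \<bullet> (q - pstar)) \<in> borel_measurable borel" by measurable
    then show ?thesis unfolding d_def using measurable_compose[OF sa_meas] by blast
  qed
  have dmP: "d \<in> borel_measurable P" unfolding d_def by measurable
  have dbound: "\<bar>d s\<bar> \<le> abar * n" if g: "good rbar abar bbar s" for s
  proof -
    have "\<bar>d s\<bar> \<le> norm (s_a s) * n" unfolding d_def n_def by (rule Cauchy_Schwarz_ineq2)
    also have "\<dots> \<le> abar * n" using g unfolding good_def n_def by (intro mult_right_mono) auto
    finally show ?thesis .
  qed
  have intdI: "integrable P (\<lambda>s. d s * Ind v s)" for v :: "real^'m"
  proof (rule int_bounded[where B="abar * n"])
    show "AE s in P. good rbar abar bbar s \<longrightarrow> \<bar>d s * Ind v s\<bar> \<le> abar * n"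
    proof (intro AE_I2 impI)
      fix s :: "'m sample" assume g: "good rbar abar bbar s"
      show "\<bar>d s * Ind v s\<bar> \<le> abar * n" using dbound[OF g] Ind_01[of v s] by auto
    qed
  qed (use dmP in measurable)
  have IndP: "Ind v \<in> borel_measurable P" for v :: "real^'m" by measurable
  have ce: "(\<integral>s. d s * cond_prob_accept P v s \<partial>P) = (\<integral>s. d s * Ind v s \<partial>P)"
       "integrable P (\<lambda>s. d s * cond_prob_accept P v s)" for v :: "real^'m"
    unfolding cond_prob_accept_def Ind_def[symmetric]
    using S.real_cond_exp_intg[OF intdI dm IndP]
    by auto
  have pw: "gv pstar (Ind q s) s - gv pstar (Ind pstar s) s \<ge> d s * (Ind q s - Ind pstar s)" for s
  proof -
    have e: "gv pstar (Ind q s) s - gv pstar (Ind pstar s) s = (s_r s - s_a s \<bullet> pstar) * (Ind q s - Ind pstar s)"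
      unfolding gv_def by (simp add: inner_diff_left algebra_simps)
    have "(s_r s - s_a s \<bullet> q) * (Ind q s - Ind pstar s) \<ge> 0"
      unfolding Ind_def indicator_def by auto
    then show ?thesis unfolding e d_def by (simp add: inner_diff_right algebra_simps)
  qed
  have Bin: "meanB P \<in> Omega_b bl bbar" by (rule B_in)
  have AEc: "AE s in P. \<bar>cond_prob_accept P q s - cond_prob_accept P pstar s\<bar> \<le> mu * \<bar>s_a s \<bullet> q - s_a s \<bullet> pstar\<bar>"
  proof -
    have "AE s in P. lam * \<bar>s_a s \<bullet> q - s_a s \<bullet> pstar\<bar> \<le> \<bar>cond_prob_accept P q s - cond_prob_accept P pstar s\<bar> \<and>
           \<bar>cond_prob_accept P q s - cond_prob_accept P pstar s\<bar> \<le> mu * \<bar>s_a s \<bullet> q - s_a s \<bullet> pstar\<bar>"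
      using nd(3) q Bin pstar by blast
    then show ?thesis by (rule eventually_mono) (elim conjE)
  qed
  have AEd: "AE s in P. - (mu * abar\<^sup>2 * n\<^sup>2) \<le> d s * (cond_prob_accept P q s - cond_prob_accept P pstar s)"
    using AEc AE_good
  proof eventually_elim
    case (elim s)
    let ?c = "cond_prob_accept P q s - cond_prob_accept P pstar s"
    have 1: "\<bar>?c\<bar> \<le> mu * \<bar>d s\<bar>" using elim(1) unfolding d_def by (simp add: inner_diff_right)
    have "- (d s * ?c) \<le> \<bar>d s\<bar> * \<bar>?c\<bar>" by (simp add: abs_mult[symmetric])
    also have "\<dots> \<le> \<bar>d s\<bar> * (mu * \<bar>d s\<bar>)" using 1 by (intro mult_left_mono) auto
    also have "\<dots> = mu * \<bar>d s\<bar>\<^sup>2" by (simp add: power2_eq_square)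
    also have "\<dots> \<le> mu * (abar * n)\<^sup>2" using dbound[OF elim(2)] pos
      by (intro mult_left_mono power_mono) auto
    finally show ?case by (simp add: power_mult_distrib)
  qed
  have "(\<integral>s. gv pstar (Ind q s) s \<partial>P) - (\<integral>s. gv pstar (Ind pstar s) s \<partial>P)
      = (\<integral>s. gv pstar (Ind q s) s - gv pstar (Ind pstar s) s \<partial>P)"
    using int_gv by (rule Bochner_Integration.integral_diff[symmetric]) (rule int_gv)
  also have "\<dots> \<ge> (\<integral>s. d s * Ind q s - d s * Ind pstar s \<partial>P)"
    using pw intdI int_gv
    by (intro integral_mono) (auto simp: algebra_simps intro!: Bochner_Integration.integrable_diff)
  moreover have "(\<integral>s. d s * Ind q s - d s * Ind pstar s \<partial>P)
      = (\<integral>s. d s * cond_prob_accept P q s - d s * cond_prob_accept P pstar s \<partial>P)"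
    using intdI ce by (simp add: Bochner_Integration.integral_diff)
  moreover have "(\<integral>s. d s * cond_prob_accept P q s - d s * cond_prob_accept P pstar s \<partial>P) \<ge> - (mu * abar\<^sup>2 * n\<^sup>2)"
    using ce(2) AEd by (intro P.integral_ge_const) (auto simp: algebra_simps intro!: Bochner_Integration.integrable_diff)
  ultimately show ?thesis unfolding integral_gv_pstar n_def by linarith
qed

end


context setting begin

definition G :: "real^'m \<Rightarrow> 'm sample \<Rightarrow> real" where
  "G q s = (if good rbar abar bbar s then
              (if q \<in> Omega_p rbar bl then gv pstar (Ind q s) s + mu * abar\<^sup>2 * (norm (q - pstar))\<^sup>2
               else gv pstar (Ind pstar s) s) else 0)"

lemma good_pred[measurable]: "Measurable.pred borel (good rbar abar bbar)"
  unfolding good_def by measurable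

lemma gvInd_meas[measurable]: "(\<lambda>(q, s). gv ps (Ind q s) s) \<in> borel_measurable (borel \<Otimes>\<^sub>M borel)"
  using measurable_Pair_compose_split[OF gv_meas Ind_meas measurable_snd] by simp

lemma gvInd_meas2[measurable]: "(\<lambda>s. gv ps (Ind q s) s) \<in> borel_measurable borel"
  using measurable_Pair_compose_split[OF gv_meas Ind_meas2 measurable_id] by simp

lemma G_meas[measurable]: "(\<lambda>(q, s). G q s) \<in> borel_measurable (borel \<Otimes>\<^sub>M borel)"
  unfolding G_def by measurable

lemma G_meas2[measurable]: "G q \<in> borel_measurable borel"
  using measurable_Pair_compose_split[OF G_meas measurable_const measurable_id] by simp

definition CG where "CG = C + mu * abar\<^sup>2 * (2 * (rbar / bl))\<^sup>2"

lemma norm_diff_Omega: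
  assumes "q \<in> Omega_p rbar bl" shows "norm (q - pstar) \<le> 2 * (rbar / bl)"
proof -
  have "norm (q - pstar) \<le> norm q + norm pstar" by (rule norm_triangle_ineq4)
  also have "\<dots> \<le> rbar / bl + rbar / bl"
    using norm_le_sum_nonneg[of q] norm_le_sum_nonneg[OF pstar_nonneg] pstar_sum assms
    unfolding Omega_p_def by (intro add_mono) auto
  finally show ?thesis by simp
qed

lemma G_bound: "\<bar>G q s\<bar> \<le> CG"
proof -
  have c0: "0 \<le> mu * abar\<^sup>2 * (2 * (rbar / bl))\<^sup>2" using pos by simp
  show ?thesis
  proof (cases "good rbar abar bbar s")
    case False then show ?thesis using C_nonneg c0 by (simp add: G_def CG_def)
  next
    case g: True
    show ?thesis
    proof (cases "q \<in> Omega_p rbar bl")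
      case True
      have "(norm (q - pstar))\<^sup>2 \<le> (2 * (rbar / bl))\<^sup>2"
        using norm_diff_Omega[OF True] by (intro power_mono) auto
      then have "mu * abar\<^sup>2 * (norm (q - pstar))\<^sup>2 \<le> mu * abar\<^sup>2 * (2 * (rbar / bl))\<^sup>2"
        using pos by (intro mult_left_mono) auto
      moreover have "\<bar>gv pstar (Ind q s) s\<bar> \<le> C" by (intro gv_bound g Ind_01)
      moreover have c1: "0 \<le> mu * abar\<^sup>2 * (norm (q - pstar))\<^sup>2" using pos by simp
      moreover have "\<bar>G q s\<bar> \<le> \<bar>gv pstar (Ind q s) s\<bar> + mu * abar\<^sup>2 * (norm (q - pstar))\<^sup>2"
        using True g c1 abs_triangle_ineq[of "gv pstar (Ind q s) s" "mu * abar\<^sup>2 * (norm (q - pstar))\<^sup>2"]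
        unfolding G_def by simp
      ultimately show ?thesis unfolding CG_def by linarith
    next
      case False
      have "\<bar>gv pstar (Ind pstar s) s\<bar> \<le> C" by (intro gv_bound g Ind_01)
      then show ?thesis using False g c0 unfolding G_def CG_def by auto
    qed
  qed
qed

lemma inner_G: "dualf P pstar (meanB P) \<le> (\<integral>s. G q s \<partial>P)"
proof (cases "q \<in> Omega_p rbar bl")
  case True
  have "(\<integral>s. G q s \<partial>P) = (\<integral>s. gv pstar (Ind q s) s + mu * abar\<^sup>2 * (norm (q - pstar))\<^sup>2 \<partial>P)"
    using True by (intro integral_cong_AE) (measurable, rule eventually_mono[OF AE_good], simp add: G_def)
  also have "\<dots> = (\<integral>s. gv pstar (Ind q s) s \<partial>P) + mu * abar\<^sup>2 * (norm (q - pstar))\<^sup>2"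
    using int_gv by (simp add: P.prob_space)
  finally show ?thesis using main_P[OF True] by linarith
next
  case False
  have "(\<integral>s. G q s \<partial>P) = (\<integral>s. gv pstar (Ind pstar s) s \<partial>P)"
    using False by (intro integral_cong_AE) (measurable, rule eventually_mono[OF AE_good], simp add: G_def)
  then show ?thesis using integral_gv_pstar by simp
qed

lemma expect_G:
  fixes M :: "'w measure" and X :: "'w \<Rightarrow> real^'m" and Z :: "'w \<Rightarrow> 'm sample"
  assumes M: "prob_space M" and X[measurable]: "X \<in> borel_measurable M" and Z[measurable]: "Z \<in> borel_measurable M"
    and dist: "distr M borel Z = P"
    and ind: "\<And>A B. A \<in> sets borel \<Longrightarrow> B \<in> sets borel \<Longrightarrow>
       measure M ((X -` A \<inter> space M) \<inter> (Z -` B \<inter> space M)) = measure M (X -` A \<inter> space M) * measure M (Z -` B \<inter> space M)"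
  shows "dualf P pstar (meanB P) \<le> (\<integral>w. G (X w) (Z w) \<partial>M)"
proof -
  interpret M: prob_space M by (rule M)
  define Q where "Q = distr M borel X"
  have Qp: "prob_space Q" unfolding Q_def by (rule M.prob_space_distr) simp
  interpret QP: pair_prob_space Q P using Qp probP by (simp add: pair_prob_space_def pair_sigma_finite_def prob_space_imp_sigma_finite)
  have XZ[measurable]: "(\<lambda>w. (X w, Z w)) \<in> measurable M (borel \<Otimes>\<^sub>M borel)" by measurable
  have "Q \<Otimes>\<^sub>M distr M borel Z = distr M (borel \<Otimes>\<^sub>M borel) (\<lambda>w. (X w, Z w))"
  proof (rule pair_measure_eqI)
    show "sigma_finite_measure Q" using Qp by (rule prob_space_imp_sigma_finite)
    show "sigma_finite_measure (distr M borel Z)" using probP unfolding dist by (rule prob_space_imp_sigma_finite)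
    show "sets (Q \<Otimes>\<^sub>M distr M borel Z) = sets (distr M (borel \<Otimes>\<^sub>M borel) (\<lambda>w. (X w, Z w)))"
      unfolding Q_def by simp
  next
    fix A B assume A: "A \<in> sets Q" and B: "B \<in> sets (distr M borel Z)"
    then have A': "A \<in> sets borel" and B': "B \<in> sets borel" unfolding Q_def by auto
    have "emeasure (distr M (borel \<Otimes>\<^sub>M borel) (\<lambda>w. (X w, Z w))) (A \<times> B)
        = emeasure M ((\<lambda>w. (X w, Z w)) -` (A \<times> B) \<inter> space M)"
      using A' B' by (intro emeasure_distr) auto
    also have "(\<lambda>w. (X w, Z w)) -` (A \<times> B) \<inter> space M = (X -` A \<inter> space M) \<inter> (Z -` B \<inter> space M)" by auto
    also have "emeasure M \<dots> = ennreal (measure M (X -` A \<inter> space M) * measure M (Z -` B \<inter> space M))"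
      using ind[OF A' B'] by (simp add: M.emeasure_eq_measure)
    also have "\<dots> = emeasure Q A * emeasure (distr M borel Z) B"
      unfolding Q_def using A' B'
      by (simp add: emeasure_distr M.emeasure_eq_measure ennreal_mult measure_nonneg)
    finally show "emeasure Q A * emeasure (distr M borel Z) B = emeasure (distr M (borel \<Otimes>\<^sub>M borel) (\<lambda>w. (X w, Z w))) (A \<times> B)" by simp
  qed
  then have joint: "Q \<Otimes>\<^sub>M P = distr M (borel \<Otimes>\<^sub>M borel) (\<lambda>w. (X w, Z w))" unfolding dist .
  have sQ[measurable_cong]: "sets Q = sets borel" unfolding Q_def by simp
  have Gm: "(\<lambda>(q, s). G q s) \<in> borel_measurable (Q \<Otimes>\<^sub>M P)" by measurable
  have intG: "integrable (Q \<Otimes>\<^sub>M P) (\<lambda>(q, s). G q s)"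
    by (rule QP.P.integrable_const_bound[where B=CG]) (auto simp: G_bound Gm)
  have "(\<integral>w. G (X w) (Z w) \<partial>M) = (\<integral>x. (\<lambda>(q, s). G q s) x \<partial>(Q \<Otimes>\<^sub>M P))"
    unfolding joint by (subst integral_distr) auto
  also have "\<dots> = (\<integral>q. (\<integral>s. G q s \<partial>P) \<partial>Q)"
    using QP.integral_fst'[OF intG] by simp
  finally have eq: "(\<integral>w. G (X w) (Z w) \<partial>M) = (\<integral>q. (\<integral>s. G q s \<partial>P) \<partial>Q)" .
  have "dualf P pstar (meanB P) \<le> (\<integral>q. (\<integral>s. G q s \<partial>P) \<partial>Q)"
    using QP.integrable_fst'[OF intG] inner_G by (intro prob_space.integral_ge_const[OF Qp]) auto
  then show ?thesis using eq by simp
qed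

end


theorem lemma11:
  fixes P :: "'m::finite sample measure"
    and rbar abar bbar bl lam mu :: real
    and M :: "'w measure" and F :: "int \<Rightarrow> 'w measure"
    and \<tau>1 \<tau>2 :: int
    and r :: "int \<Rightarrow> 'w \<Rightarrow> real" and a b :: "int \<Rightarrow> 'w \<Rightarrow> real ^ 'm"
    and p :: "int \<Rightarrow> 'w \<Rightarrow> real ^ 'm"
    and inv :: "int \<Rightarrow> 'w \<Rightarrow> real ^ 'm" and x :: "int \<Rightarrow> 'w \<Rightarrow> real"
    and inv0 pstar :: "real ^ 'm"
  assumes nondeg: "nondegenerate P rbar abar bbar bl lam mu"
    and pstar: "is_dual_min P (meanB P) pstar"
    and M: "prob_space M"
    and tau: "\<tau>1 \<le> \<tau>2"
    \<comment> \<open>filtration: information available up to each time\<close>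
    and filt_sub: "\<And>t. subalgebra M (F t)"
    and filt_mono: "\<And>s t. s \<le> t \<Longrightarrow> sets (F s) \<subseteq> sets (F t)"
    \<comment> \<open>samples: i.i.d. from P, revealed at time t\<close>
    and Z_adapted: "\<And>t. t \<in> {\<tau>1..\<tau>2} \<Longrightarrow> (\<lambda>w. (r t w, a t w, b t w)) \<in> borel_measurable (F t)"
    and Z_dist: "\<And>t. t \<in> {\<tau>1..\<tau>2} \<Longrightarrow> distr M borel (\<lambda>w. (r t w, a t w, b t w)) = P"
    and Z_iid: "prob_space.indep_vars M (\<lambda>_. borel) (\<lambda>t w. (r t w, a t w, b t w)) {\<tau>1..\<tau>2}"
    and Z_indep_past: "\<And>t. t \<in> {\<tau>1..\<tau>2} \<Longrightarrow>
        prob_space.indep_set M (sets (F (t - 1)))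
          {(\<lambda>w. (r t w, a t w, b t w)) -` A \<inter> space M | A. A \<in> sets borel}"
    \<comment> \<open>prices chosen with information up to time t-1\<close>
    and p_pred: "\<And>t. t \<in> {\<tau>1..\<tau>2} \<Longrightarrow> p t \<in> borel_measurable (F (t - 1))"
    and p_nonneg: "\<And>t w. t \<in> {\<tau>1..\<tau>2} \<Longrightarrow> w \<in> space M \<Longrightarrow> nonneg_vec (p t w)"
    \<comment> \<open>decisions and inventory dynamics\<close>
    and l0: "nonneg_vec inv0"
    and l_init: "\<And>w. w \<in> space M \<Longrightarrow> inv \<tau>1 w = inv0"
    and x_def: "\<And>t w. t \<in> {\<tau>1..\<tau>2} \<Longrightarrow> w \<in> space M \<Longrightarrow>
        x t w = (if r t w > a t w \<bullet> p t w then 1 else 0) *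
                (if (\<forall>j. inv t w $ j + b t w $ j \<ge> a t w $ j) then 1 else 0)"
    and l_step: "\<And>t w. t \<in> {\<tau>1..\<tau>2} \<Longrightarrow> w \<in> space M \<Longrightarrow>
        inv (t + 1) w = inv t w + b t w - x t w *\<^sub>R a t w"
  shows "(\<integral>w. (\<Sum>t\<in>{\<tau>1..\<tau>2}. r t w * x t w) + (inv (\<tau>2 + 1) w - inv \<tau>1 w) \<bullet> pstar \<partial>M)
         \<ge> real_of_int (\<tau>2 - \<tau>1 + 1) * dualf P pstar (meanB P)
           - mu * abar\<^sup>2 * (\<integral>w. (\<Sum>t\<in>{\<tau>1..\<tau>2}. (norm (p t w - pstar))\<^sup>2 * indicator (Omega_p rbar bl) (p t w)) \<partial>M)
           - 2 * real_of_int (\<tau>2 - \<tau>1 + 1) * (rbar + (bbar + abar) * (rbar / bl))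
             * measure M (space M - {w \<in> space M. \<forall>t\<in>{\<tau>1..\<tau>2}.
                 p t w \<in> Omega_p rbar bl \<and> x t w = (if r t w > a t w \<bullet> p t w then 1 else 0)})"
proof -
  interpret setting P rbar abar bbar bl lam mu pstar
    using nondeg pstar by (simp add: setting_def)
  interpret M: prob_space M by (rule M)
  define T where "T = {\<tau>1..\<tau>2}"
  have finT: "finite T" unfolding T_def by simp
  define Z where "Z = (\<lambda>t w. (r t w, a t w, b t w))"
  have Zm: "Z t \<in> borel_measurable M" if "t \<in> T" for t
    using measurable_from_subalg[OF filt_sub Z_adapted] that unfolding Z_def T_def by auto
  have Zr: "s_r (Z t w) = r t w" "s_a (Z t w) = a t w" "s_b (Z t w) = b t w" for t w
    unfolding Z_def s_r_def s_a_def s_b_def by auto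
  have rm: "r t \<in> borel_measurable M" if "t \<in> T" for t
    using measurable_compose[OF Zm[OF that] s_meas(1)] by (simp add: Zr)
  have am: "a t \<in> borel_measurable M" if "t \<in> T" for t
    using measurable_compose[OF Zm[OF that] s_meas(2)] by (simp add: Zr)
  have bm: "b t \<in> borel_measurable M" if "t \<in> T" for t
    using measurable_compose[OF Zm[OF that] s_meas(3)] by (simp add: Zr)
  have pm: "p t \<in> borel_measurable M" if "t \<in> T" for t
    using measurable_from_subalg[OF filt_sub p_pred] that unfolding T_def by auto
  have xm: "x t \<in> borel_measurable M" if t: "t \<in> T" and im: "inv t \<in> borel_measurable M" for t
  proof -
    note [measurable] = rm[OF t] am[OF t] bm[OF t] pm[OF t] im
    have "(\<lambda>w. (if r t w > a t w \<bullet> p t w then 1 else 0) *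
                (if (\<forall>j. inv t w $ j + b t w $ j \<ge> a t w $ j) then 1 else (0::real))) \<in> borel_measurable M"
      by measurable
    then show ?thesis using x_def t unfolding T_def by (subst measurable_cong) auto
  qed
  have invm_k: "inv (\<tau>1 + int k) \<in> borel_measurable M" if "\<tau>1 + int k \<le> \<tau>2 + 1" for k
    using that
  proof (induction k)
    case 0
    have "(\<lambda>_. inv0) \<in> borel_measurable M" by simp
    then show ?case using l_init by (subst measurable_cong) auto
  next
    case (Suc k)
    define t where "t = \<tau>1 + int k"
    have t: "t \<in> T" using Suc.prems unfolding t_def T_def by auto
    have im: "inv t \<in> borel_measurable M" using Suc unfolding t_def by auto
    note [measurable] = rm[OF t] am[OF t] bm[OF t] xm[OF t im] im
    have "(\<lambda>w. inv t w + b t w - x t w *\<^sub>R a t w) \<in> borel_measurable M" by measurable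
    then have "inv (t + 1) \<in> borel_measurable M"
      using l_step t unfolding T_def by (subst measurable_cong) auto
    then show ?case unfolding t_def by (simp add: ac_simps)
  qed
  have invm: "inv t \<in> borel_measurable M" if "t \<in> T" for t
    using invm_k[of "nat (t - \<tau>1)"] that unfolding T_def by auto
  have xmT: "x t \<in> borel_measurable M" if "t \<in> T" for t using xm[OF that invm[OF that]] .
  have x01: "x t w = 0 \<or> x t w = 1" if "t \<in> T" "w \<in> space M" for t w
    using x_def[of t w] that unfolding T_def by auto
  have tele: "inv (\<tau>2 + 1) w - inv \<tau>1 w = (\<Sum>t\<in>T. b t w - x t w *\<^sub>R a t w)" if w: "w \<in> space M" for w
  proof -
    have "\<tau>1 \<le> u \<Longrightarrow> u \<le> \<tau>2 + 1 \<Longrightarrow> inv u w - inv \<tau>1 w = (\<Sum>t\<in>{\<tau>1..<u}. b t w - x t w *\<^sub>R a t w)" for u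
    proof (induction u rule: int_ge_induct)
      case base then show ?case by simp
    next
      case (step i)
      have "{\<tau>1..<i+1} = insert i {\<tau>1..<i}" using step.hyps by auto
      then have S1: "(\<Sum>t\<in>{\<tau>1..<i+1}. b t w - x t w *\<^sub>R a t w) = (b i w - x i w *\<^sub>R a i w) + (\<Sum>t\<in>{\<tau>1..<i}. b t w - x t w *\<^sub>R a t w)"
        by simp
      have L: "inv (i + 1) w = inv i w + b i w - x i w *\<^sub>R a i w"
        using l_step[of i w] step w by auto
      have IH: "inv i w - inv \<tau>1 w = (\<Sum>t\<in>{\<tau>1..<i}. b t w - x t w *\<^sub>R a t w)"
        using step by simp
      have "inv (i + 1) w - inv \<tau>1 w = (b i w - x i w *\<^sub>R a i w) + (inv i w - inv \<tau>1 w)"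
        unfolding L by (simp add: algebra_simps)
      also have "\<dots> = (\<Sum>t\<in>{\<tau>1..<i+1}. b t w - x t w *\<^sub>R a t w)" unfolding IH S1 ..
      finally show ?case .
    qed
    from this[of "\<tau>2 + 1"] show ?thesis using tau unfolding T_def atLeastLessThanPlusOne_atLeastAtMost_int by simp
  qed
  define gvt where "gvt t w = gv pstar (x t w) (Z t w)" for t w
  have lhs_eq: "(\<Sum>t\<in>T. r t w * x t w) + (inv (\<tau>2 + 1) w - inv \<tau>1 w) \<bullet> pstar = (\<Sum>t\<in>T. gvt t w)"
    if "w \<in> space M" for w
    unfolding tele[OF that] gvt_def gv_def Zr inner_sum_left sum.distrib[symmetric] ..

  define Egood where "Egood = {w \<in> space M. \<forall>t\<in>T. p t w \<in> Omega_p rbar bl \<and> x t w = (if r t w > a t w \<bullet> p t w then 1 else 0)}"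
  define Ebad where "Ebad = space M - Egood"
  have Egood_sets: "Egood \<in> sets M"
    unfolding Egood_def
  proof (rule sets.sets_Collect_finite_All[OF _ finT])
    fix t assume t: "t \<in> T"
    note [measurable] = pm[OF t] xmT[OF t] rm[OF t] am[OF t]
    show "{w \<in> space M. p t w \<in> Omega_p rbar bl \<and> x t w = (if r t w > a t w \<bullet> p t w then 1 else 0)} \<in> sets M"
      by measurable
  qed
  have Ebad_sets: "Ebad \<in> sets M" unfolding Ebad_def using Egood_sets by auto
  have AEg: "AE w in M. \<forall>t\<in>T. good rbar abar bbar (Z t w)"
  proof (rule AE_finite_allI[OF finT])
    fix t assume t: "t \<in> T"
    have dz: "distr M borel (Z t) = P" using Z_dist t unfolding Z_def T_def by simp
    have "AE s in distr M borel (Z t). good rbar abar bbar s" unfolding dz by (rule AE_good)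
    then show "AE w in M. good rbar abar bbar (Z t w)"
      by (subst (asm) AE_distr_iff[OF Zm[OF t]]) (use good_meas in auto)
  qed
  define Gt where "Gt t w = G (p t w) (Z t w)" for t w
  define Nt where "Nt t w = (norm (p t w - pstar))\<^sup>2 * indicator (Omega_p rbar bl) (p t w)" for t w
  have pw: "Gt t w - mu * abar\<^sup>2 * Nt t w - 2 * C * indicator Ebad w \<le> gvt t w"
    if w: "w \<in> space M" and t: "t \<in> T" and g: "good rbar abar bbar (Z t w)" for t w
  proof (cases "w \<in> Egood")
    case True
    then have pin: "p t w \<in> Omega_p rbar bl" and xe: "x t w = (if r t w > a t w \<bullet> p t w then 1 else 0)"
      using t unfolding Egood_def by auto
    have "x t w = Ind (p t w) (Z t w)" unfolding xe Ind_def indicator_def by (simp add: Zr)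
    then show ?thesis using True pin g unfolding Gt_def Nt_def G_def gvt_def Ebad_def by simp
  next
    case False
    have ib: "indicator Ebad w = (1::real)" using False w unfolding Ebad_def by simp
    have "\<bar>gvt t w\<bar> \<le> C" unfolding gvt_def by (rule gv_bound[OF g x01[OF t w]])
    moreover have "Gt t w - mu * abar\<^sup>2 * Nt t w \<le> C"
    proof (cases "p t w \<in> Omega_p rbar bl")
      case True
      then show ?thesis using gv_bound[OF g Ind_01[of "p t w" "Z t w"]] unfolding Gt_def Nt_def G_def
        by (simp add: g abs_le_iff)
    next
      case False
      then show ?thesis using gv_bound[OF g Ind_01[of pstar "Z t w"]] unfolding Gt_def Nt_def G_def
        by (simp add: g abs_le_iff)
    qed
    ultimately show ?thesis using ib by (simp add: abs_le_iff)
  qed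
  have gvt_m: "gvt t \<in> borel_measurable M" if t: "t \<in> T" for t
    unfolding gvt_def[abs_def] by (rule measurable_Pair_compose_split[OF gv_meas xmT[OF t] Zm[OF t]])
  have int_gvt: "integrable M (gvt t)" if t: "t \<in> T" for t
  proof (rule M.integrable_const_bound[where B=C])
    show "AE w in M. norm (gvt t w) \<le> C"
      using AEg AE_space
    proof eventually_elim
      case (elim w)
      then show ?case unfolding gvt_def using gv_bound x01 t by simp
    qed
  qed (rule gvt_m[OF t])
  have Gt_m: "Gt t \<in> borel_measurable M" if t: "t \<in> T" for t
    unfolding Gt_def[abs_def] by (rule measurable_Pair_compose_split[OF G_meas pm[OF t] Zm[OF t]])
  have int_Gt: "integrable M (Gt t)" if t: "t \<in> T" for t
    by (rule M.integrable_const_bound[where B=CG]) (auto simp: Gt_def G_bound intro: Gt_m[OF t])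
  have Nt_m: "Nt t \<in> borel_measurable M" if t: "t \<in> T" for t
  proof -
    note [measurable] = pm[OF t]
    show ?thesis unfolding Nt_def[abs_def] by measurable
  qed
  have Nt_bound: "\<bar>Nt t w\<bar> \<le> (2 * (rbar / bl))\<^sup>2" for t w
  proof (cases "p t w \<in> Omega_p rbar bl")
    case True
    then have "(norm (p t w - pstar))\<^sup>2 \<le> (2 * (rbar / bl))\<^sup>2"
      using norm_diff_Omega by (intro power_mono) auto
    then show ?thesis using True unfolding Nt_def by simp
  qed (simp add: Nt_def)
  have int_Nt: "integrable M (Nt t)" if t: "t \<in> T" for t
    by (rule M.integrable_const_bound[where B="(2 * (rbar / bl))\<^sup>2"]) (rule AE_I2, simp only: real_norm_def Nt_bound, rule Nt_m[OF t])
  have int_ind: "integrable M (indicator Ebad :: 'w \<Rightarrow> real)"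
    by (rule M.integrable_const_bound[where B=1]) (auto intro: borel_measurable_indicator[OF Ebad_sets])
  have EG: "dualf P pstar (meanB P) \<le> (\<integral>w. Gt t w \<partial>M)" if t: "t \<in> T" for t
    unfolding Gt_def
  proof (rule expect_G[OF M pm[OF t] Zm[OF t]])
    show "distr M borel (Z t) = P" using Z_dist t unfolding Z_def T_def by simp
  next
    fix A :: "(real^'m) set" and B :: "'m sample set" assume A: "A \<in> sets borel" and B: "B \<in> sets borel"
    have tT: "t \<in> {\<tau>1..\<tau>2}" using t unfolding T_def .
    have sp: "space (F (t - 1)) = space M" using filt_sub[of "t - 1"] unfolding subalgebra_def by simp
    have "p t -` A \<inter> space (F (t - 1)) \<in> sets (F (t - 1))" using measurable_sets[OF p_pred[OF tT] A] .
    then have a: "p t -` A \<inter> space M \<in> sets (F (t - 1))" unfolding sp .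
    have b: "Z t -` B \<inter> space M \<in> {(\<lambda>w. (r t w, a t w, b t w)) -` A \<inter> space M | A. A \<in> sets borel}"
      using B unfolding Z_def by blast
    show "measure M ((p t -` A \<inter> space M) \<inter> (Z t -` B \<inter> space M)) = measure M (p t -` A \<inter> space M) * measure M (Z t -` B \<inter> space M)"
      using Z_indep_past[OF tT] a b unfolding M.indep_sets2_eq by blast
  qed
  have cardT: "real_of_int (\<tau>2 - \<tau>1 + 1) = real (card T)" unfolding T_def using tau by simp
  have "(\<integral>w. (\<Sum>t\<in>{\<tau>1..\<tau>2}. r t w * x t w) + (inv (\<tau>2 + 1) w - inv \<tau>1 w) \<bullet> pstar \<partial>M)
      = (\<integral>w. (\<Sum>t\<in>T. gvt t w) \<partial>M)"
    using lhs_eq unfolding T_def by (intro Bochner_Integration.integral_cong) auto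
  also have "\<dots> \<ge> (\<integral>w. (\<Sum>t\<in>T. Gt t w) - mu * abar\<^sup>2 * (\<Sum>t\<in>T. Nt t w) - real (card T) * (2 * C) * indicator Ebad w \<partial>M)"
  proof (rule integral_mono_AE)
    show "integrable M (\<lambda>w. \<Sum>t\<in>T. gvt t w)" using int_gvt by auto
    show "integrable M (\<lambda>w. (\<Sum>t\<in>T. Gt t w) - mu * abar\<^sup>2 * (\<Sum>t\<in>T. Nt t w) - real (card T) * (2 * C) * indicator Ebad w)"
      using int_Gt int_Nt int_ind by (intro Bochner_Integration.integrable_diff integrable_mult_right) auto
    show "AE w in M. (\<Sum>t\<in>T. Gt t w) - mu * abar\<^sup>2 * (\<Sum>t\<in>T. Nt t w) - real (card T) * (2 * C) * indicator Ebad w \<le> (\<Sum>t\<in>T. gvt t w)"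
      using AEg AE_space
    proof eventually_elim
      case (elim w)
      have "(\<Sum>t\<in>T. Gt t w) - mu * abar\<^sup>2 * (\<Sum>t\<in>T. Nt t w) - real (card T) * (2 * C) * indicator Ebad w
          = (\<Sum>t\<in>T. Gt t w - mu * abar\<^sup>2 * Nt t w - 2 * C * indicator Ebad w)"
        by (simp add: sum_subtractf sum_distrib_left)
      also have "\<dots> \<le> (\<Sum>t\<in>T. gvt t w)" using elim pw by (intro sum_mono) auto
      finally show ?case .
    qed
  qed
  also have "(\<integral>w. (\<Sum>t\<in>T. Gt t w) - mu * abar\<^sup>2 * (\<Sum>t\<in>T. Nt t w) - real (card T) * (2 * C) * indicator Ebad w \<partial>M)
      = (\<Sum>t\<in>T. (\<integral>w. Gt t w \<partial>M)) - mu * abar\<^sup>2 * (\<integral>w. (\<Sum>t\<in>T. Nt t w) \<partial>M) - real (card T) * (2 * C) * measure M Ebad"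
    using int_Gt int_Nt int_ind Ebad_sets
    by (simp add: Bochner_Integration.integral_diff Bochner_Integration.integral_sum Bochner_Integration.integrable_sum)
  finally have main: "(\<Sum>t\<in>T. (\<integral>w. Gt t w \<partial>M)) - mu * abar\<^sup>2 * (\<integral>w. (\<Sum>t\<in>T. Nt t w) \<partial>M) - real (card T) * (2 * C) * measure M Ebad
      \<le> (\<integral>w. (\<Sum>t\<in>{\<tau>1..\<tau>2}. r t w * x t w) + (inv (\<tau>2 + 1) w - inv \<tau>1 w) \<bullet> pstar \<partial>M)" .
  have "real (card T) * dualf P pstar (meanB P) \<le> (\<Sum>t\<in>T. (\<integral>w. Gt t w \<partial>M))"
    using sum_mono[of T "\<lambda>_. dualf P pstar (meanB P)" "\<lambda>t. \<integral>w. Gt t w \<partial>M"] EG by simp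
  with main show ?thesis
    unfolding cardT Nt_def[abs_def] Ebad_def Egood_def C_def T_def by (simp add: algebra_simps)
qed

end
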